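(* For every integer $k\geq 1$ there exist $n$ and a covering $k$-colouring of the edges of $K_n^{(3)}$ with no tricoloured $4$-set.
   Context: $K_n^{(3)}$ is the complete $3$-uniform hypergraph on $n$ vertices (edges are all $3$-subsets). A $3$-uniform hypergraph on vertex set $V$ is a covering if every $2$-subset of $V$ is contained in some edge. A $k$-colouring of the edges of $K_n^{(3)}$ is covering if for each colour, the $3$-graph on all $n$ vertices formed by the edges of that colour is a covering. A $4$-set of vertices is tricoloured if its four $3$-subsets receive exactly three distinct colours. *)

theory Defs
  imports Main
begin

definition edges3 :: "nat \<Rightarrow> nat set set" where
  "edges3 n = {e. e \<subseteq> {..<n} \<and> card e = 3}"

definition is_colouring :: "nat \<Rightarrow> nat \<Rightarrow> (nat set \<Rightarrow> nat) \<Rightarrow> bool" where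
  "is_colouring n k c \<longleftrightarrow> (\<forall>e\<in>edges3 n. c e < k)"

definition is_covering :: "nat set \<Rightarrow> nat set set \<Rightarrow> bool" where
  "is_covering V H \<longleftrightarrow> (\<forall>p. p \<subseteq> V \<and> card p = 2 \<longrightarrow> (\<exists>e\<in>H. p \<subseteq> e))"

definition covering_colouring :: "nat \<Rightarrow> nat \<Rightarrow> (nat set \<Rightarrow> nat) \<Rightarrow> bool" where
  "covering_colouring n k c \<longleftrightarrow> is_colouring n k c \<and>
     (\<forall>i<k. is_covering {..<n} {e\<in>edges3 n. c e = i})"

definition tricoloured :: "(nat set \<Rightarrow> nat) \<Rightarrow> nat set \<Rightarrow> bool" where
  "tricoloured c S \<longleftrightarrow> card (c ` {e. e \<subseteq> S \<and> card e = 3}) = 3"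

end

theory Submission
  imports Defs
begin

definition dl :: "nat \<Rightarrow> nat \<Rightarrow> nat" where
  "dl x y = (LEAST j. x div 2^(Suc j) = y div 2^(Suc j))"

lemma div_up: "(x::nat) div 2^j = y div 2^j \<Longrightarrow> x div 2^(j+m) = y div 2^(j+m)"
  by (simp add: power_add div_mult2_eq)

lemma div_suc: "(x::nat) div 2^(Suc j) = x div 2^j div 2"
  by (metis div_mult2_eq power_Suc2)

lemma dl_ex: "\<exists>j. (x::nat) div 2^(Suc j) = y div 2^(Suc j)"
proof -
  have "x < 2^(Suc (x+y))" "y < 2^(Suc (x+y))"
    by (metis less_exp add_lessD1 less_SucI add.commute lessI less_trans)+
  then show ?thesis by (intro exI[of _ "x+y"]) simp
qed

lemma dl_char: "((x::nat) div 2^j = y div 2^j) \<longleftrightarrow> (x = y \<or> dl x y < j)"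
proof (cases j)
  case 0 then show ?thesis by simp
next
  case (Suc m)
  show ?thesis
  proof
    assume h: "x div 2^j = y div 2^j"
    have "dl x y \<le> m" unfolding dl_def using h Suc by (intro Least_le) simp
    then show "x = y \<or> dl x y < j" using Suc by simp
  next
    assume "x = y \<or> dl x y < j"
    then show "x div 2^j = y div 2^j"
    proof
      assume "dl x y < j"
      have h: "x div 2^(Suc (dl x y)) = y div 2^(Suc (dl x y))"
        unfolding dl_def by (rule LeastI_ex[OF dl_ex])
      have "j = Suc (dl x y) + (j - Suc (dl x y))" using \<open>dl x y < j\<close> by simp
      then show ?thesis using div_up[OF h, of "j - Suc (dl x y)"] by metis
    qed simp
  qed
qed

lemma dl_sym: "dl x y = dl y x"
  unfolding dl_def by (simp add: eq_commute)

lemma dl_self: "dl x x = 0"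
  unfolding dl_def by simp

lemma dl_ultra: "dl x z \<le> max (dl x y) (dl y z)"
proof -
  let ?j = "Suc (max (dl x y) (dl y z))"
  have l1: "dl x y < ?j" "dl y z < ?j" by (simp_all add: less_Suc_eq_le)
  have "x div 2^?j = y div 2^?j" using dl_char[of x ?j y] l1 by blast
  moreover have "y div 2^?j = z div 2^?j" using dl_char[of y ?j z] l1 by blast
  ultimately have "x div 2^?j = z div 2^?j" by simp
  then have "x = z \<or> dl x z < ?j" using dl_char[of x ?j z] by blast
  then show ?thesis by (auto simp: dl_self)
qed

lemma dl_binary:
  assumes "x \<noteq> y" "y \<noteq> z" "x \<noteq> z" "dl x y = dl y z" "dl x z = dl y z"
  shows False
proof -
  let ?d = "dl x y"
  have a: "\<And>u v. u \<noteq> v \<Longrightarrow> dl u v = ?d \<Longrightarrow> u div 2^?d \<noteq> v div 2^?d \<and> u div 2^?d div 2 = v div 2^?d div 2"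
  proof -
    fix u v :: nat assume "u \<noteq> v" "dl u v = ?d"
    then have "u div 2^?d \<noteq> v div 2^?d" "u div 2^(Suc ?d) = v div 2^(Suc ?d)"
      using dl_char[of u ?d v] dl_char[of u "Suc ?d" v] by auto
    then show "u div 2^?d \<noteq> v div 2^?d \<and> u div 2^?d div 2 = v div 2^?d div 2"
      by (metis div_suc)
  qed
  have p: "\<And>a b::nat. a \<noteq> b \<Longrightarrow> a div 2 = b div 2 \<Longrightarrow> a mod 2 \<noteq> b mod 2"
    by (metis div_mult_mod_eq)
  have "x div 2^?d mod 2 \<noteq> y div 2^?d mod 2" using a[of x y] assms p by auto
  moreover have "y div 2^?d mod 2 \<noteq> z div 2^?d mod 2" using a[of y z] assms p by auto
  moreover have "x div 2^?d mod 2 \<noteq> z div 2^?d mod 2" using a[of x z] assms p by auto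
  ultimately show False by linarith
qed

lemma flip: "\<exists>z. z \<noteq> x \<and> dl x z = j \<and> x div 2^(Suc j) = z div 2^(Suc j)"
proof -
  define q where "q = x div 2^(Suc j)"
  define b where "b = x div 2^j mod 2"
  define r where "r = x mod 2^j"
  define z where "z = q * 2^(Suc j) + (1 - b) * 2^j + r"
  have xj: "x div 2^j = 2*q + b" unfolding q_def b_def div_suc
    by simp
  have rl: "r < 2^j" unfolding r_def by simp
  have zj: "z div 2^j = 2*q + (1-b)"
  proof -
    have "z = (2*q + (1-b)) * 2^j + r" unfolding z_def by (simp add: algebra_simps)
    then show ?thesis using rl by simp
  qed
  have b2: "b < 2" unfolding b_def by simp
  have ne: "z div 2^j \<noteq> x div 2^j" unfolding xj zj using b2 by (cases b) auto
  have eq: "x div 2^(Suc j) = z div 2^(Suc j)"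
    using xj zj b2 by (simp only: div_suc) simp
  have "z \<noteq> x" using ne by auto
  moreover have "dl x z = j"
    using dl_char[of x j z] dl_char[of x "Suc j" z] ne eq \<open>z \<noteq> x\<close> by auto
  ultimately show ?thesis using eq by blast
qed


definition DS :: "nat set \<Rightarrow> nat set" where
  "DS A = {dl x y | x y. x \<in> A \<and> y \<in> A \<and> x \<noteq> y}"

lemma DS_finite: "finite A \<Longrightarrow> finite (DS A)"
proof -
  assume "finite A"
  have "DS A \<subseteq> (\<lambda>(x,y). dl x y) ` (A \<times> A)" unfolding DS_def by auto
  then show ?thesis using \<open>finite A\<close> finite_subset by blast
qed

lemma DS_I: "x \<in> A \<Longrightarrow> y \<in> A \<Longrightarrow> x \<noteq> y \<Longrightarrow> dl x y \<in> DS A"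
  unfolding DS_def by blast

lemma DS_E: "w \<in> DS A \<Longrightarrow> \<exists>x y. w = dl x y \<and> x \<in> A \<and> y \<in> A \<and> x \<noteq> y"
  unfolding DS_def by blast

lemma DS_mono: "A \<subseteq> B \<Longrightarrow> DS A \<subseteq> DS B"
  unfolding DS_def by blast

lemma DS_insert:
  assumes "finite A" "A \<noteq> {}" "x \<notin> A"
  shows "\<exists>m. DS (insert x A) \<subseteq> insert m (DS A)"
proof -
  obtain a0 where a0: "a0 \<in> A" "\<And>a. a \<in> A \<Longrightarrow> dl x a0 \<le> dl x a"
  proof -
    let ?M = "Min ((\<lambda>a. dl x a) ` A)"
    have "?M \<in> (\<lambda>a. dl x a) ` A" using assms by (intro Min_in) auto
    then obtain a0 where "a0 \<in> A" "dl x a0 = ?M" by auto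
    moreover have "\<And>a. a \<in> A \<Longrightarrow> ?M \<le> dl x a" using assms by (intro Min_le) auto
    ultimately show ?thesis using that by metis
  qed
  have key: "\<And>v. v \<in> A \<Longrightarrow> dl x v = dl x a0 \<or> dl x v \<in> DS A"
  proof -
    fix v assume v: "v \<in> A"
    show "dl x v = dl x a0 \<or> dl x v \<in> DS A"
    proof (cases "dl x v = dl x a0")
      case False
      then have lt: "dl x a0 < dl x v" using a0(2)[OF v] by simp
      have u1: "dl x v \<le> max (dl x a0) (dl a0 v)" by (rule dl_ultra)
      have u2: "dl a0 v \<le> max (dl a0 x) (dl x v)" by (rule dl_ultra)
      have s: "dl a0 x = dl x a0" by (rule dl_sym)
      have "dl a0 v = dl x v" using u1 u2 lt unfolding s by linarith
      moreover have "a0 \<noteq> v" using False by auto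
      ultimately have "dl x v \<in> DS A" using DS_I[OF a0(1) v] by simp
      then show ?thesis by simp
    qed simp
  qed
  have "DS (insert x A) \<subseteq> insert (dl x a0) (DS A)"
  proof
    fix w assume "w \<in> DS (insert x A)"
    then obtain u v where uv: "w = dl u v" "u \<in> insert x A" "v \<in> insert x A" "u \<noteq> v"
      by (metis DS_E)
    show "w \<in> insert (dl x a0) (DS A)"
    proof (cases "u = x")
      case True
      then have "v \<in> A" using uv(3,4) by simp
      then show ?thesis using key[of v] uv(1) True by simp
    next
      case False
      note F = this
      show ?thesis
      proof (cases "v = x")
        case True
        then have "u \<in> A" using uv(2) F by simp
        then show ?thesis using key[of u] uv(1) True dl_sym[of u x] by simp
      next
        case False
        then have "u \<in> A" "v \<in> A" using uv(2,3) F by simp_all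
        then have "w \<in> DS A" using DS_I uv(1,4) by simp
        then show ?thesis by simp
      qed
    qed
  qed
  then show ?thesis by blast
qed

lemma DS_card: "finite A \<Longrightarrow> card (DS A) \<le> card A - 1"
proof (induction A rule: finite_induct)
  case empty
  then show ?case by (simp add: DS_def)
next
  case (insert x A)
  show ?case
  proof (cases "A = {}")
    case True
    then have "DS (insert x A) = {}" unfolding DS_def by auto
    then show ?thesis by simp
  next
    case False
    obtain m where m: "DS (insert x A) \<subseteq> insert m (DS A)"
      using DS_insert[OF insert(1) False insert(2)] by blast
    have "card (DS (insert x A)) \<le> card (insert m (DS A))"
      by (rule card_mono) (simp_all add: DS_finite insert(1) m)
    also have "\<dots> \<le> card (DS A) + 1" by (simp add: card_insert_le_m1 card_insert_if DS_finite insert(1))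
    also have "\<dots> \<le> card A"
    proof -
      have "card A > 0" using False insert(1) by auto
      then show ?thesis using insert(3) by linarith
    qed
    finally show ?thesis using insert(1,2) by simp
  qed
qed

lemma DS_three:
  assumes "x \<noteq> y" "y \<noteq> z" "x \<noteq> z"
  shows "DS {x,y,z} = {dl x y, dl y z, dl x z}"
proof
  show "DS {x,y,z} \<subseteq> {dl x y, dl y z, dl x z}"
    unfolding DS_def using dl_sym[of y x] dl_sym[of z y] dl_sym[of z x] by auto
  show "{dl x y, dl y z, dl x z} \<subseteq> DS {x,y,z}"
    unfolding DS_def using assms by blast
qed


definition col :: "nat set \<Rightarrow> nat" where
  "col T = dl (Min (DS T)) (Max (DS T))"

lemma dl_bound:
  assumes "(a::nat) < 2^m" "b < 2^m" "m \<ge> 1"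
  shows "dl a b < m"
proof -
  have "a div 2^m = b div 2^m" using assms by simp
  then have "a = b \<or> dl a b < m" using dl_char[of a m b] by blast
  then show ?thesis using assms(3) dl_self by auto
qed

lemma div_bound:
  assumes "(a::nat) div 2^m = b div 2^m" "m \<le> N" "a < 2^N"
  shows "b < 2^N"
proof -
  have "a div 2^N = b div 2^N" using div_up[OF assms(1), of "N - m"] assms(2) by simp
  then have "b div 2^N = 0" using assms(3) by simp
  then show ?thesis by (simp add: div_eq_0_iff)
qed

lemma col_in:
  assumes "T \<subseteq> S" "card T = 3"
  shows "col T \<in> DS (DS S)"
proof -
  obtain x y z where T: "T = {x,y,z}" "x \<noteq> y" "y \<noteq> z" "x \<noteq> z"
    using assms(2) card_3_iff by metis
  have D: "DS T = {dl x y, dl y z, dl x z}" using T DS_three by simp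
  have fin: "finite (DS T)" "DS T \<noteq> {}" using D by auto
  have mi: "Min (DS T) \<in> DS T" "Max (DS T) \<in> DS T" using fin by (simp_all add: Min_in Max_in)
  have ne: "Min (DS T) \<noteq> Max (DS T)"
  proof
    assume e: "Min (DS T) = Max (DS T)"
    have "\<And>w. w \<in> DS T \<Longrightarrow> w = Min (DS T)"
      using fin e by (metis Max_ge Min_le antisym)
    then have "dl x y = Min (DS T)" "dl y z = Min (DS T)" "dl x z = Min (DS T)" using D by simp_all
    then have "dl x y = dl y z" "dl x z = dl y z" by simp_all
    then show False using dl_binary T(2-4) by blast
  qed
  have sub: "DS T \<subseteq> DS S" using assms(1) DS_mono by blast
  show ?thesis unfolding col_def using DS_I[OF _ _ ne] mi sub by blast
qed

lemma cover_pt: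
  assumes "x \<noteq> y" "x < 2^N" "y < 2^N" "N = 2^k" "i < k"
  shows "\<exists>z. z < 2^N \<and> z \<noteq> x \<and> z \<noteq> y \<and> col {x,y,z} = i"
proof -
  have k1: "k \<ge> 1" using assms(5) by simp
  have N1: "N \<ge> 1" using assms(4) by simp
  define d where "d = dl x y"
  have dN: "d < 2^k" using dl_bound[OF assms(2,3) N1] assms(4) d_def by simp
  obtain j where j: "j \<noteq> d" "dl d j = i" "d div 2^(Suc i) = j div 2^(Suc i)"
    using flip[of d i] by metis
  have jN: "j < N" using div_bound[OF j(3) _ dN] assms(4,5) by simp
  obtain z where z: "z \<noteq> x" "dl x z = j" "x div 2^(Suc j) = z div 2^(Suc j)"
    using flip[of x j] by metis
  have zN: "z < 2^N" using div_bound[OF z(3) _ assms(2)] jN by simp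
  have zy: "z \<noteq> y" using z(2) j(1) d_def by auto
  have u1: "dl y z \<le> max (dl y x) (dl x z)" by (rule dl_ultra)
  have u2: "dl x y \<le> max (dl x z) (dl z y)" by (rule dl_ultra)
  have u3: "dl x z \<le> max (dl x y) (dl y z)" by (rule dl_ultra)
  have s1: "dl y x = d" "dl z y = dl y z" unfolding d_def by (rule dl_sym)+
  have v1: "dl y z \<le> max d j" using u1 unfolding s1 z(2) .
  have v2: "d \<le> max j (dl y z)" using u2 unfolding s1 z(2) d_def[symmetric] .
  have v3: "j \<le> max d (dl y z)" using u3 unfolding z(2) d_def[symmetric] .
  have dyz: "dl y z = max d j" using v1 v2 v3 j(1) unfolding max_def by (auto split: if_splits)
  have DSe: "DS {x,y,z} = {d, j}"
    using DS_three[OF assms(1) zy[symmetric] z(1)[symmetric]] dyz z(2) d_def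
    by (auto simp: max_def)
  have "col {x,y,z} = dl (min d j) (max d j)" unfolding col_def DSe by simp
  also have "\<dots> = i" using j(2) dl_sym[of d j] by (simp add: min_def max_def)
  finally show ?thesis using zN z(1) zy by blast
qed

theorem lemma11:
  fixes k :: nat
  assumes "k \<ge> 1"
  shows "\<exists>n c. n \<ge> 3 \<and> covering_colouring n k c \<and>
           (\<forall>S. S \<subseteq> {..<n} \<and> card S = 4 \<longrightarrow> \<not> tricoloured c S)"
proof -
  define N :: nat where "N = 2^k"
  define n :: nat where "n = 2^N"
  have N2: "N \<ge> 2" unfolding N_def using assms
    by (metis One_nat_def le_trans one_le_numeral power_increasing power_one_right)
  have n3: "n \<ge> 3"
  proof -
    have "(2::nat)^2 \<le> 2^N" using N2 by (intro power_increasing) auto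
    then show ?thesis unfolding n_def by simp
  qed
  have colour: "is_colouring n k col"
    unfolding is_colouring_def
  proof
    fix e assume "e \<in> edges3 n"
    then have e: "e \<subseteq> {..<n}" "card e = 3" unfolding edges3_def by auto
    obtain x y z where T: "e = {x,y,z}" "x \<noteq> y" "y \<noteq> z" "x \<noteq> z"
      using e(2) card_3_iff by metis
    have D: "DS e = {dl x y, dl y z, dl x z}" using T DS_three by simp
    have fin: "finite (DS e)" "DS e \<noteq> {}" using D by auto
    have lt: "x < 2^N" "y < 2^N" "z < 2^N" using e(1) T(1) n_def by auto
    have bnd: "\<And>w. w \<in> DS e \<Longrightarrow> w < 2^k"
      using D lt dl_bound[of _ N] N2 N_def by auto
    have "Min (DS e) < 2^k" "Max (DS e) < 2^k" using bnd fin Min_in Max_in by auto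
    then show "col e < k" unfolding col_def using dl_bound assms by blast
  qed
  have cov: "\<forall>i<k. is_covering {..<n} {e\<in>edges3 n. col e = i}"
  proof (intro allI impI)
    fix i assume i: "i < k"
    show "is_covering {..<n} {e\<in>edges3 n. col e = i}"
      unfolding is_covering_def
    proof (intro allI impI)
      fix p assume p: "p \<subseteq> {..<n} \<and> card p = 2"
      obtain x y where xy: "p = {x,y}" "x \<noteq> y" using p card_2_iff by metis
      have lt: "x < 2^N" "y < 2^N" using p xy n_def by auto
      obtain z where z: "z < 2^N" "z \<noteq> x" "z \<noteq> y" "col {x,y,z} = i"
        using cover_pt[OF xy(2) lt N_def i] by blast
      have "{x,y,z} \<in> edges3 n" unfolding edges3_def n_def using lt z xy(2) by auto
      then show "\<exists>e\<in>{e\<in>edges3 n. col e = i}. p \<subseteq> e" using z(4) xy(1) by blast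
    qed
  qed
  have tri: "\<forall>S. S \<subseteq> {..<n} \<and> card S = 4 \<longrightarrow> \<not> tricoloured col S"
  proof (intro allI impI)
    fix S assume S: "S \<subseteq> {..<n} \<and> card S = 4"
    have finS: "finite S" using S finite_subset by blast
    have sub: "col ` {e. e \<subseteq> S \<and> card e = 3} \<subseteq> DS (DS S)" using col_in by blast
    have "card (col ` {e. e \<subseteq> S \<and> card e = 3}) \<le> card (DS (DS S))"
      by (rule card_mono[OF DS_finite[OF DS_finite[OF finS]] sub])
    also have "\<dots> \<le> card (DS S) - 1" by (rule DS_card[OF DS_finite[OF finS]])
    also have "\<dots> \<le> 2" using DS_card[OF finS] S by simp
    finally show "\<not> tricoloured col S" unfolding tricoloured_def by simp
  qed
  show ?thesis using n3 colour cov tri unfolding covering_colouring_def by blast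
qed

end
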